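(* Let $T(p)=\exp(-(-\ln p)^\alpha)$ for $p\in[0,1]$ with parameter $\alpha>0$, $\alpha\ne1$, and let $\tilde T(p):=1-T(1-p)=1-\exp(-(-\ln(1-p))^\alpha)$. (1) If $\alpha>1$ (so $T$ is S-shaped), then $p^*(\alpha):=\inf\{p\in[0,1):\tilde T'(p)\ge\frac{1-\tilde T(p)}{1-p}\}$ equals $p^*(\alpha)=1-\exp\big(-\alpha^{-\frac{1}{\alpha-1}}\big)$. (2) If $\alpha<1$ (so $T$ is inverse S-shaped), then $p^*(\alpha):=\sup\{p\in[0,1):\tilde T'(p)\le\tilde T(p)/p\}$ equals $p^*(\alpha)=1-\exp(-x)$, where $x$ is the unique solution of $$x=\Big(\ln\big(\alpha x^{\alpha-1}e^x(1-e^{-x})+1\big)\Big)^{1/\alpha}.$$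
   Context: $T$ is the Prelec probability weighting function with parameter $\alpha$. *)

theory Defs
  imports "HOL-Analysis.Analysis"
begin

definition prelecT :: "real \<Rightarrow> real \<Rightarrow> real" where
  "prelecT \<alpha> p = exp (- ((- ln p) powr \<alpha>))"

definition prelecTt :: "real \<Rightarrow> real \<Rightarrow> real" where
  "prelecTt \<alpha> p = 1 - prelecT \<alpha> (1 - p)"

text \<open>Derivative of Ttilde at p, taken within the domain [0,1) (one-sided at p = 0).
  The predicates below require the derivative to exist.\<close>
definition pstar_S :: "real \<Rightarrow> real" where
  "pstar_S \<alpha> = Inf {p \<in> {0..<1}. \<exists>D. (prelecTt \<alpha> has_real_derivative D) (at p within {0..<1})
        \<and> D \<ge> (1 - prelecTt \<alpha> p) / (1 - p)}"

definition pstar_IS :: "real \<Rightarrow> real" where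
  "pstar_IS \<alpha> = Sup {p \<in> {0..<1}. \<exists>D. (prelecTt \<alpha> has_real_derivative D) (at p within {0..<1})
        \<and> D \<le> prelecTt \<alpha> p / p}"

end

theory Submission
  imports Defs "HOL-Real_Asymp.Real_Asymp"
begin

definition Kf :: "real \<Rightarrow> real \<Rightarrow> real" where
  "Kf a y = (1 - exp(-y)) * (a * y powr (a-1) * exp(y - y powr a)) - (1 - exp(-(y powr a)))"

definition mf :: "real \<Rightarrow> real \<Rightarrow> real" where
  "mf a y = a - 1 + y - a * y powr a"

lemma alg_aux:
  fixes a A y F E G P Q :: real
  assumes "P = A*y*y" "Q = A*y" "G = F*E"
  shows "F*(a*Q*E) + ((a-1)*A*a*E + E*(1 - a*Q)*(a*Q))*(1-F) - G*(a*Q) = (1-F)*a*E*A*(a-1+y-a*P)"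
  using assms by algebra

lemma K_deriv:
  assumes "0 < y"
  shows "(Kf a has_real_derivative (1 - exp(-y)) * a * exp(y - y powr a) * y powr (a-2) * mf a y) (at y)"
proof -
  have h1: "exp(-(y powr a)) = exp(-y) * exp(y - y powr a)" by (simp add: exp_add[symmetric])
  have h2: "y powr (a-1) = y powr (a-2) * y"
  proof -
    have "y powr (a-1) = y powr ((a-2) + 1)" by simp
    also have "\<dots> = y powr (a-2) * y powr 1" by (rule powr_add)
    finally show ?thesis using assms by simp
  qed
  have h3: "y powr a = y powr (a-2) * y * y"
  proof -
    have "y powr a = y powr ((a-1) + 1)" by simp
    also have "\<dots> = y powr (a-1) * y powr 1" by (rule powr_add)
    finally show ?thesis using assms h2 by simp
  qed
  have "((\<lambda>y. (1 - exp(-y)) * (a * y powr (a-1) * exp(y - y powr a)) - (1 - exp(-(y powr a)))) has_real_derivative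
     exp (- y) * (a * y powr (a - 1) * exp (y - y powr a)) +
    ((a - 1) * y powr (a - 2) * a * exp (y - y powr a) +
     exp (y - y powr a) * (1 - a * y powr (a - 1)) * (a * y powr (a - 1))) *
    (1 - exp (- y)) -
    exp (- (y powr a)) * (a * y powr (a - 1))) (at y)"
    apply (insert assms) apply (rule derivative_eq_intros refl | simp)+ done
  also have "exp (- y) * (a * y powr (a - 1) * exp (y - y powr a)) +
    ((a - 1) * y powr (a - 2) * a * exp (y - y powr a) +
     exp (y - y powr a) * (1 - a * y powr (a - 1)) * (a * y powr (a - 1))) *
    (1 - exp (- y)) -
    exp (- (y powr a)) * (a * y powr (a - 1)) = (1 - exp(-y)) * a * exp(y - y powr a) * y powr (a-2) * mf a y"
    unfolding mf_def by (rule alg_aux[OF h3 h2 h1])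
  finally show ?thesis unfolding Kf_def[abs_def] .
qed

lemma m_neg: "0 < a \<Longrightarrow> a < 1 \<Longrightarrow> 0 < y \<Longrightarrow> y < 1 \<Longrightarrow> mf a y < 0"
proof -
  assume as: "0 < a" "a < 1" "0 < y" "y < 1"
  have "y powr 1 < y powr a" by (rule powr_less_mono') (use as in auto)
  hence "y < y powr a" using as by simp
  hence "a * y < a * y powr a" using as by simp
  moreover have "(1-a)*(y-1) < 0" using as by (simp add: mult_pos_neg)
  moreover have "(1-a)*(y-1) = y - 1 - a*y + a" by algebra
  ultimately show ?thesis unfolding mf_def by linarith
qed

lemma m_pos: "0 < a \<Longrightarrow> a < 1 \<Longrightarrow> 1 < y \<Longrightarrow> mf a y > 0"
proof -
  assume as: "0 < a" "a < 1" "1 < y"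
  have "y powr a < y powr 1" by (rule powr_less_mono) (use as in auto)
  hence "y powr a < y" using as by simp
  hence "a * y powr a < a * y" using as by simp
  moreover have "(1-a)*(y-1) > 0" using as by simp
  moreover have "(1-a)*(y-1) = y - 1 - a*y + a" by algebra
  ultimately show ?thesis unfolding mf_def by linarith
qed

lemma K_cont: "0 < a \<Longrightarrow> 0 < u \<Longrightarrow> continuous_on {u..v} (Kf a)"
  by (intro continuous_at_imp_continuous_on ballI DERIV_isCont[OF K_deriv]) auto

lemma K_dec: assumes "0 < a" "a < 1" "0 < u" "u < v" "v \<le> 1" shows "Kf a v < Kf a u"
proof (rule DERIV_neg_imp_decreasing_open[OF assms(4) _ K_cont[OF assms(1,3)]])
  fix x assume x: "u < x" "x < v"
  have "mf a x < 0" using m_neg[of a x] x assms by auto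
  moreover have "0 < 1 - exp (-x)" using x assms by simp
  ultimately have "(1 - exp(-x)) * a * exp(x - x powr a) * x powr (a-2) * mf a x < 0"
    using assms x by (simp add: mult_pos_neg)
  thus "\<exists>y. (Kf a has_real_derivative y) (at x) \<and> y < 0" using K_deriv[of x a] x assms by auto
qed

lemma K_inc: assumes "0 < a" "a < 1" "1 \<le> u" "u < v" shows "Kf a u < Kf a v"
proof (rule DERIV_pos_imp_increasing_open[OF assms(4) _ K_cont])
  fix x assume x: "u < x" "x < v"
  have "mf a x > 0" using m_pos[of a x] x assms by auto
  moreover have "0 < 1 - exp (-x)" using x assms by simp
  ultimately have "(1 - exp(-x)) * a * exp(x - x powr a) * x powr (a-2) * mf a x > 0"
    using assms x by simp
  thus "\<exists>y. (Kf a has_real_derivative y) (at x) \<and> y > 0" using K_deriv[of x a] x assms by auto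
qed (use assms in auto)

lemma K_lim0: assumes "0 < a" "a < 1" shows "(Kf a \<longlongrightarrow> 0) (at_right 0)"
proof -
  have l1: "((\<lambda>y::real. (1-exp(-y))/y) \<longlongrightarrow> 1) (at_right 0)" by real_asymp
  have l2: "((\<lambda>y::real. y powr a) \<longlongrightarrow> 0) (at_right 0)" using \<open>0 < a\<close> by real_asymp
  have "((\<lambda>y. (1 - exp(-y))/y * y powr a * (a * exp(y - y powr a)) - (1 - exp(-(y powr a)))) \<longlongrightarrow> 1*0*(a*exp(0-0)) - (1 - exp(-0))) (at_right 0)"
    by (intro tendsto_intros l1 l2)
  hence "((\<lambda>y. (1 - exp(-y))/y * y powr a * (a * exp(y - y powr a)) - (1 - exp(-(y powr a)))) \<longlongrightarrow> 0) (at_right 0)"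
    by simp
  moreover have "eventually (\<lambda>y. (1 - exp(-y))/y * y powr a * (a * exp(y - y powr a)) - (1 - exp(-(y powr a))) = Kf a y) (at_right 0)"
    unfolding eventually_at_right_less
  proof -
    show "\<forall>\<^sub>F y in at_right 0. (1 - exp(-y))/y * y powr a * (a * exp(y - y powr a)) - (1 - exp(-(y powr a))) = Kf a y"
      using eventually_at_right_less[of "0::real"]
    proof (rule eventually_mono)
      fix y :: real assume y: "0 < y"
      have "y powr (a-1) = y powr a / y" using y by (simp add: powr_diff)
      thus "(1 - exp(-y))/y * y powr a * (a * exp(y - y powr a)) - (1 - exp(-(y powr a))) = Kf a y"
        unfolding Kf_def by simp
    qed
  qed
  ultimately show ?thesis by (rule tendsto_cong[THEN iffD1, rotated])
qed

lemma K_top: assumes "0 < a" "a < 1" shows "filterlim (Kf a) at_top at_top"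
  unfolding Kf_def[abs_def] using assms by real_asymp

lemma K_neg: assumes "0 < a" "a < 1" "0 < y" "y \<le> 1" shows "Kf a y < 0"
proof -
  have le: "Kf a v \<le> 0" if v: "0 < v" "v \<le> 1" for v
  proof (rule tendsto_lowerbound[OF K_lim0[OF assms(1,2)]])
    show "\<forall>\<^sub>F t in at_right 0. Kf a v \<le> Kf a t"
      unfolding eventually_at_right[of 0 v, OF v(1)]
      by (rule exI[of _ v]) (use v assms in \<open>auto intro!: less_imp_le K_dec\<close>)
  qed simp
  have "Kf a y < Kf a (y/2)" using K_dec[of a "y/2" y] assms by auto
  also have "\<dots> \<le> 0" using le[of "y/2"] assms by auto
  finally show ?thesis .
qed

lemma Tt_val: "p < 1 \<Longrightarrow> prelecTt a p = 1 - exp (- ((- ln (1 - p)) powr a))"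
  by (simp add: prelecTt_def prelecT_def)

lemma Tt_deriv: "0 < p \<Longrightarrow> p < 1 \<Longrightarrow>
  (prelecTt a has_real_derivative (exp (- ((- ln (1 - p)) powr a)) * (a * (- ln (1 - p)) powr (a - 1)) / (1 - p))) (at p)"
  unfolding prelecTt_def[abs_def] prelecT_def
  by (rule derivative_eq_intros refl | simp)+

lemma Tt_unique:
  assumes "0 < p" "p < 1" "(prelecTt a has_real_derivative D) (at p within {0..<1})"
  shows "D = exp (- ((- ln (1 - p)) powr a)) * (a * (- ln (1 - p)) powr (a - 1)) / (1 - p)"
proof -
  have "at p within {0..<1} = at p"
    by (rule at_within_open_subset[of p "{0<..<1}"]) (use assms in auto)
  with assms(3) have "(prelecTt a has_real_derivative D) (at p)" by simp
  with Tt_deriv[OF assms(1,2)] show ?thesis by (metis DERIV_unique)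
qed

lemma y_conv: "(p::real) < 1 \<Longrightarrow> (c \<le> - ln (1 - p)) \<longleftrightarrow> 1 - exp (- c) \<le> p"
proof -
  assume p: "p < 1"
  have "(c \<le> - ln (1 - p)) \<longleftrightarrow> ln (1 - p) \<le> -c" by (intro iffI; linarith)
  also have "\<dots> \<longleftrightarrow> exp (ln (1 - p)) \<le> exp (-c)" by simp
  also have "\<dots> \<longleftrightarrow> 1 - p \<le> exp (-c)" using p by simp
  finally show ?thesis by auto
qed

lemma ypos: "0 < (p::real) \<Longrightarrow> p < 1 \<Longrightarrow> 0 < - ln (1 - p)"
  using ln_less_zero[of "1 - p"] by simp

lemma y_conv2: "(p::real) < 1 \<Longrightarrow> (- ln (1 - p) \<le> c) \<longleftrightarrow> p \<le> 1 - exp (- c)"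
proof -
  assume p: "p < 1"
  have "(- ln (1 - p) \<le> c) \<longleftrightarrow> -c \<le> ln (1 - p)" by (intro iffI; linarith)
  also have "\<dots> \<longleftrightarrow> exp (-c) \<le> exp (ln (1 - p))" by simp
  also have "\<dots> \<longleftrightarrow> exp (-c) \<le> 1 - p" using p by simp
  finally show ?thesis by auto
qed

lemma deriv0:
  assumes "1 < a" "(prelecTt a has_real_derivative D) (at 0 within {0..<1})"
  shows "D \<le> 0"
proof -
  have F: "at (0::real) within {0..<1} = at_right 0"
  proof -
    have "at (0::real) within {0..<1} = at 0 within {0..1}"
      by (rule at_within_nhd[of _ "{-1<..<1}"]) auto
    also have "\<dots> = at_right 0" by (rule at_within_Icc_at_right) simp
    finally show ?thesis .
  qed
  have T0: "prelecTt a 0 = 0" by (simp add: prelecTt_def prelecT_def)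
  from assms(2) have lim: "((\<lambda>p. prelecTt a p / p) \<longlongrightarrow> D) (at_right 0)"
    unfolding has_field_derivative_iff F T0 by simp
  have lim2: "((\<lambda>p::real. 2 powr a * p powr (a-1)) \<longlongrightarrow> 0) (at_right 0)"
    using assms(1) by real_asymp
  have bnd: "prelecTt a p / p \<le> 2 powr a * p powr (a-1)" if p: "0 < p" "p < 1/2" for p
  proof -
    define y where "y = - ln (1 - p)"
    have y0: "0 < y" unfolding y_def using ypos[of p] p by auto
    have "y = ln (1 / (1 - p))" unfolding y_def using p by (simp add: ln_div)
    also have "\<dots> \<le> 1 / (1 - p) - 1" by (rule ln_le_minus_one) (use p in auto)
    also have "\<dots> = p / (1 - p)" using p by (simp add: field_simps)
    also have "\<dots> \<le> 2 * p" using p by (simp add: field_simps)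
    finally have y2: "y \<le> 2 * p" .
    have "prelecTt a p = 1 - exp (- (y powr a))" unfolding y_def using p by (simp add: Tt_val)
    also have "\<dots> \<le> y powr a" using exp_ge_add_one_self[of "- (y powr a)"] by simp
    also have "\<dots> \<le> (2 * p) powr a" by (rule powr_mono2) (use assms y0 y2 in auto)
    also have "\<dots> = 2 powr a * p powr a" using p by (simp add: powr_mult)
    finally have "prelecTt a p \<le> 2 powr a * p powr a" .
    hence "prelecTt a p / p \<le> 2 powr a * p powr a / p" using p by (simp add: divide_right_mono)
    also have "\<dots> = 2 powr a * p powr (a-1)" using p by (simp add: powr_diff)
    finally show "prelecTt a p / p \<le> 2 powr a * p powr (a-1)" .
  qed
  have ev: "eventually (\<lambda>p. prelecTt a p / p \<le> 2 powr a * p powr (a-1)) (at_right 0)"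
    unfolding eventually_at_right[of 0 "1/2", OF half_gt_zero[OF zero_less_one]]
    using bnd by (intro exI[of _ "1/2"]) auto
  show ?thesis using tendsto_le[OF trivial_limit_at_right_real lim2 lim ev] by simp
qed

lemma part1:
  assumes a: "1 < a"
  shows "pstar_S a = 1 - exp (- (a powr (- 1 / (a - 1))))"
proof -
  define y0 where "y0 = a powr (- 1 / (a - 1))"
  have y0pos: "0 < y0" unfolding y0_def using a by simp
  have e1: "- 1 / (a - 1) * (a - 1) = -1" using a by simp
  have y0pow: "y0 powr (a-1) = 1 / a"
    unfolding y0_def powr_powr e1 using a by (simp add: powr_neg_one)
  have key: "(1 \<le> a * y powr (a-1)) \<longleftrightarrow> y0 \<le> y" if y: "0 < y" for y
  proof
    assume h: "1 \<le> a * y powr (a-1)"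
    show "y0 \<le> y"
    proof (rule ccontr)
      assume "\<not> y0 \<le> y"
      hence "y powr (a-1) < y0 powr (a-1)" by (intro powr_less_mono2) (use a y in auto)
      hence "a * y powr (a-1) < a * (1/a)" using a y0pow by (intro mult_strict_left_mono) auto
      thus False using h a by simp
    qed
  next
    assume h: "y0 \<le> y"
    hence "y0 powr (a-1) \<le> y powr (a-1)" by (intro powr_mono2) (use a y0pos in auto)
    hence "a * (1/a) \<le> a * y powr (a-1)" using a y0pow by (intro mult_left_mono) auto
    thus "1 \<le> a * y powr (a-1)" using a by simp
  qed
  have cond: "((1 - prelecTt a p) / (1 - p) \<le> exp (- ((- ln (1 - p)) powr a)) * (a * (- ln (1 - p)) powr (a - 1)) / (1 - p))
      \<longleftrightarrow> 1 - exp (- y0) \<le> p" if p: "0 < p" "p < 1" for p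
  proof -
    define y where "y = - ln (1 - p)"
    have yp: "0 < y" unfolding y_def using ypos p by auto
    have "1 - prelecTt a p = exp (- (y powr a))" unfolding y_def using p by (simp add: Tt_val)
    hence "((1 - prelecTt a p) / (1 - p) \<le> exp (- ((- ln (1 - p)) powr a)) * (a * (- ln (1 - p)) powr (a - 1)) / (1 - p))
      \<longleftrightarrow> (exp (- (y powr a)) / (1 - p) \<le> exp (- (y powr a)) * (a * y powr (a - 1)) / (1 - p))"
      unfolding y_def by simp
    also have "\<dots> \<longleftrightarrow> 1 \<le> a * y powr (a - 1)" using p
      by (simp add: divide_le_cancel)
    also have "\<dots> \<longleftrightarrow> y0 \<le> y" using key yp by simp
    also have "\<dots> \<longleftrightarrow> 1 - exp (- y0) \<le> p" unfolding y_def using y_conv p by simp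
    finally show ?thesis .
  qed
  have T0: "prelecTt a 0 = 0" by (simp add: prelecTt_def prelecT_def)
  have p0: "0 < 1 - exp (- y0)" "1 - exp (- y0) < 1" using y0pos by auto
  have S: "{p \<in> {0..<1}. \<exists>D. (prelecTt a has_real_derivative D) (at p within {0..<1})
        \<and> D \<ge> (1 - prelecTt a p) / (1 - p)} = {1 - exp (- y0)..<1}"
  proof (intro equalityI subsetI)
    fix p assume "p \<in> {p \<in> {0..<1}. \<exists>D. (prelecTt a has_real_derivative D) (at p within {0..<1})
        \<and> D \<ge> (1 - prelecTt a p) / (1 - p)}"
    then obtain D where p: "0 \<le> p" "p < 1" and D: "(prelecTt a has_real_derivative D) (at p within {0..<1})"
      and le: "D \<ge> (1 - prelecTt a p) / (1 - p)" by auto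
    show "p \<in> {1 - exp (- y0)..<1}"
    proof (cases "p = 0")
      case True
      with D have "D \<le> 0" using deriv0[OF a] by simp
      with le True T0 show ?thesis by simp
    next
      case False
      hence pp: "0 < p" using p by simp
      from Tt_unique[OF pp p(2) D] le cond[OF pp p(2)] p show ?thesis by simp
    qed
  next
    fix p assume p: "p \<in> {1 - exp (- y0)..<1}"
    hence pq: "1 - exp (- y0) \<le> p" "p < 1" by auto
    hence pp: "0 < p" "p < 1" using p0(1) by linarith+
    show "p \<in> {p \<in> {0..<1}. \<exists>D. (prelecTt a has_real_derivative D) (at p within {0..<1})
        \<and> D \<ge> (1 - prelecTt a p) / (1 - p)}"
      using pp cond[OF pp] p Tt_deriv[OF pp, of a, THEN has_field_derivative_at_within, of "{0..<1}"]
      by auto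
  qed
  show ?thesis unfolding pstar_S_def S using p0 y0_def by simp
qed

lemma part2:
  assumes a0: "0 < a" and a1: "a < 1"
  shows "(\<exists>!x::real. x > 0 \<and> x = (ln (a * x powr (a - 1) * exp x * (1 - exp (- x)) + 1)) powr (1 / a))
         \<and> (\<forall>x::real. x > 0 \<and> x = (ln (a * x powr (a - 1) * exp x * (1 - exp (- x)) + 1)) powr (1 / a)
               \<longrightarrow> pstar_IS a = 1 - exp (- x))"
proof -
  obtain Y where Y: "\<And>y. Y \<le> y \<Longrightarrow> 1 \<le> Kf a y"
    using K_top[OF a0 a1] unfolding filterlim_at_top eventually_at_top_linorder by blast
  define Y' where "Y' = max Y 2"
  have KY: "1 \<le> Kf a Y'" using Y Y'_def by simp
  have K1: "Kf a 1 < 0" using K_neg[OF a0 a1] by simp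
  obtain z where z: "1 \<le> z" "z \<le> Y'" "Kf a z = 0"
    using IVT'[of "Kf a" 1 0 Y'] K1 KY K_cont[OF a0, of 1 Y'] Y'_def by force
  have z1: "1 < z" using z K1 by (cases "z = 1") auto
  have Kle: "Kf a y \<le> 0 \<longleftrightarrow> y \<le> z" if y: "0 < y" for y
  proof (cases "y \<le> 1")
    case True
    then show ?thesis using K_neg[OF a0 a1 y] z1 by auto
  next
    case False
    show ?thesis
    proof (cases "y \<le> z")
      case True
      then show ?thesis using K_inc[OF a0 a1, of y z] z False by (cases "y = z") auto
    next
      case F2: False
      then show ?thesis using K_inc[OF a0 a1, of z y] z by auto
    qed
  qed
  have Kz: "Kf a y = 0 \<longleftrightarrow> y = z" if y: "0 < y" for y
  proof (cases "y \<le> 1")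
    case True
    then show ?thesis using K_neg[OF a0 a1 y] z1 by auto
  next
    case False
    then show ?thesis using K_inc[OF a0 a1, of y z] K_inc[OF a0 a1, of z y] z
      by (cases "y < z"; cases "z < y") auto
  qed
  have eqv: "(x = (ln (a * x powr (a - 1) * exp x * (1 - exp (- x)) + 1)) powr (1 / a)) \<longleftrightarrow> Kf a x = 0"
    if x: "0 < x" for x
  proof -
    define h where "h = a * x powr (a - 1) * exp x * (1 - exp (- x))"
    have hpos: "0 < h" unfolding h_def using x a0 by simp
    have L: "0 < ln (h + 1)" using hpos by simp
    have Kx: "Kf a x = exp (- (x powr a)) * (h + 1) - 1"
    proof -
      have "exp (x - x powr a) = exp x * exp (- (x powr a))" by (simp add: exp_add[symmetric])
      thus ?thesis unfolding Kf_def h_def by (simp add: algebra_simps)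
    qed
    have "Kf a x = 0 \<longleftrightarrow> h + 1 = exp (x powr a)"
      unfolding Kx by (auto simp: exp_minus field_simps)
    also have "\<dots> \<longleftrightarrow> ln (h + 1) = x powr a" using hpos
      by (metis exp_ln ln_exp add_pos_pos zero_less_one)
    also have "\<dots> \<longleftrightarrow> x = ln (h + 1) powr (1 / a)"
    proof
      assume "ln (h + 1) = x powr a"
      thus "x = ln (h + 1) powr (1 / a)" using x a0 by (simp add: powr_powr)
    next
      assume e: "x = ln (h + 1) powr (1 / a)"
      hence "x powr a = (ln (h + 1) powr (1 / a)) powr a" by simp
      also have "\<dots> = ln (h + 1)" using L a0 by (simp add: powr_powr)
      finally show "ln (h + 1) = x powr a" by simp
    qed
    finally show ?thesis unfolding h_def by auto
  qed
  have cond: "(exp (- ((- ln (1 - p)) powr a)) * (a * (- ln (1 - p)) powr (a - 1)) / (1 - p) \<le> prelecTt a p / p)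
      \<longleftrightarrow> Kf a (- ln (1 - p)) \<le> 0" if p: "0 < p" "p < 1" for p
  proof -
    define y where "y = - ln (1 - p)"
    have e1: "1 - p = exp (- y)" unfolding y_def using p by simp
    have e2: "p = 1 - exp (- y)" using e1 by simp
    have T: "prelecTt a p = 1 - exp (- (y powr a))" unfolding y_def using p by (simp add: Tt_val)
    have D: "exp (- (y powr a)) * (a * y powr (a - 1)) / (1 - p) = a * y powr (a-1) * exp (y - y powr a)"
      unfolding e1 by (simp add: exp_diff exp_minus field_simps)
    have "(exp (- ((- ln (1 - p)) powr a)) * (a * (- ln (1 - p)) powr (a - 1)) / (1 - p) \<le> prelecTt a p / p)
       \<longleftrightarrow> (a * y powr (a-1) * exp (y - y powr a) \<le> (1 - exp (- (y powr a))) / p)"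
      using D T unfolding y_def by simp
    also have "\<dots> \<longleftrightarrow> p * (a * y powr (a-1) * exp (y - y powr a)) \<le> 1 - exp (- (y powr a))"
      using p by (simp add: le_divide_eq mult.commute)
    also have "\<dots> \<longleftrightarrow> Kf a y \<le> 0" unfolding Kf_def e2[symmetric] by simp
    finally show ?thesis unfolding y_def .
  qed
  define pz where "pz = 1 - exp (- z)"
  have pz: "0 < pz" "pz < 1" unfolding pz_def using z1 by auto
  have ypz: "- ln (1 - pz) = z" unfolding pz_def by simp
  have Sup: "pstar_IS a = pz"
    unfolding pstar_IS_def
  proof (rule cSup_eq_maximum)
    show "pz \<in> {p \<in> {0..<1}. \<exists>D. (prelecTt a has_real_derivative D) (at p within {0..<1}) \<and> D \<le> prelecTt a p / p}"
      using pz cond[OF pz] ypz z(3) Tt_deriv[OF pz, of a, THEN has_field_derivative_at_within, of "{0..<1}"]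
      by auto
  next
    fix p assume "p \<in> {p \<in> {0..<1}. \<exists>D. (prelecTt a has_real_derivative D) (at p within {0..<1}) \<and> D \<le> prelecTt a p / p}"
    then obtain D where p: "0 \<le> p" "p < 1" and D: "(prelecTt a has_real_derivative D) (at p within {0..<1})"
      and le: "D \<le> prelecTt a p / p" by auto
    show "p \<le> pz"
    proof (cases "p = 0")
      case True thus ?thesis using pz by simp
    next
      case False
      hence pp: "0 < p" using p by simp
      have "Kf a (- ln (1 - p)) \<le> 0" using Tt_unique[OF pp p(2) D] le cond[OF pp p(2)] by simp
      hence "- ln (1 - p) \<le> z" using Kle ypos[OF pp p(2)] by simp
      thus ?thesis unfolding pz_def using y_conv2 p(2) by simp
    qed
  qed
  show ?thesis
  proof
    show "\<exists>!x::real. x > 0 \<and> x = (ln (a * x powr (a - 1) * exp x * (1 - exp (- x)) + 1)) powr (1 / a)"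
    proof (rule ex1I[of _ z])
      show "z > 0 \<and> z = (ln (a * z powr (a - 1) * exp z * (1 - exp (- z)) + 1)) powr (1 / a)"
        using eqv[of z] z z1 by simp
    next
      fix x assume "x > 0 \<and> x = (ln (a * x powr (a - 1) * exp x * (1 - exp (- x)) + 1)) powr (1 / a)"
      thus "x = z" using eqv[of x] Kz[of x] by auto
    qed
  next
    show "\<forall>x::real. x > 0 \<and> x = (ln (a * x powr (a - 1) * exp x * (1 - exp (- x)) + 1)) powr (1 / a)
               \<longrightarrow> pstar_IS a = 1 - exp (- x)"
    proof (intro allI impI)
      fix x assume "x > 0 \<and> x = (ln (a * x powr (a - 1) * exp x * (1 - exp (- x)) + 1)) powr (1 / a)"
      hence "x = z" using eqv[of x] Kz[of x] by auto
      thus "pstar_IS a = 1 - exp (- x)" using Sup pz_def by simp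
    qed
  qed
qed

theorem corollary4p3:
  fixes \<alpha> :: real
  assumes "\<alpha> > 0" and "\<alpha> \<noteq> 1"
  shows "(\<alpha> > 1 \<longrightarrow> pstar_S \<alpha> = 1 - exp (- (\<alpha> powr (- 1 / (\<alpha> - 1)))))
       \<and> (\<alpha> < 1 \<longrightarrow>
           (\<exists>!x::real. x > 0 \<and> x = (ln (\<alpha> * x powr (\<alpha> - 1) * exp x * (1 - exp (- x)) + 1)) powr (1 / \<alpha>))
         \<and> (\<forall>x::real. x > 0 \<and> x = (ln (\<alpha> * x powr (\<alpha> - 1) * exp x * (1 - exp (- x)) + 1)) powr (1 / \<alpha>)
               \<longrightarrow> pstar_IS \<alpha> = 1 - exp (- x)))"
  using part1 part2 assms by blast

end
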